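(* Let $A_1=C\setminus\mathbb{A}_1$ and $A_2=C\setminus\mathbb{A}_2$ be $C$-coconvex sets. Then $$V(A_1\oplus A_2)^{1/n}\le V(A_1\widetilde{+}A_2)^{1/n}\le V(A_1)^{1/n}+V(A_2)^{1/n},$$ and equality holds in both inequalities if and only if $\mathbb{A}_1$ and $\mathbb{A}_2$ are dilates of each other.
   Context: $C\subset\mathbb{R}^n$ ($n\ge2$) is a pointed closed convex cone with nonempty interior; $\Omega_C=\mathbb{S}^{n-1}\cap\operatorname{int}C$; $V$ is Lebesgue measure. A $C$-close set is a closed convex set $\mathbb{A}\subset C$ with $o\notin\mathbb{A}$, $\lambda x\in\mathbb{A}$ for $x\in\mathbb{A},\lambda\ge1$, recession cone $C$, and $C\setminus\mathbb{A}$ of finite volume; $A=C\setminus\mathbb{A}$ is a $C$-coconvex set. With $\rho_{\mathbb{A}}(u)=\min\{r>0:ru\in\mathbb{A}\}$, the radial sum of $\mathbb{A}_1,\mathbb{A}_2$ is $\operatorname{cl}\{\lambda u:u\in\Omega_C,\lambda\ge\rho_{\mathbb{A}_1}(u)+\rho_{\mathbb{A}_2}(u)\}$, and $A_1\widetilde{+}A_2$ is $C$ minus this radial sum. The co-sum is $A_1\oplus A_2=C\setminus(\mathbb{A}_1+\mathbb{A}_2)$ (Minkowski sum). Dilates: $\mathbb{A}_2=\lambda\mathbb{A}_1$ for some $\lambda>0$. *)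

theory Defs
  imports "HOL-Analysis.Analysis"
begin

definition pointed_cone :: "'a::euclidean_space set \<Rightarrow> bool" where
  "pointed_cone C \<longleftrightarrow> convex_cone C \<and> closed C \<and> interior C \<noteq> {} \<and>
     C \<inter> uminus ` C = {0}"

definition rec_cone :: "'a::euclidean_space set \<Rightarrow> 'a set" where
  "rec_cone K = {y. \<forall>x\<in>K. \<forall>t::real\<ge>0. x + t *\<^sub>R y \<in> K}"

definition C_close :: "'a::euclidean_space set \<Rightarrow> 'a set \<Rightarrow> bool" where
  "C_close C AA \<longleftrightarrow> closed AA \<and> convex AA \<and> AA \<subseteq> C \<and> 0 \<notin> AA \<and>
     (\<forall>x\<in>AA. \<forall>l::real\<ge>1. l *\<^sub>R x \<in> AA) \<and> rec_cone AA = C \<and>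
     (C - AA) \<in> lmeasurable"

definition Omega :: "'a::euclidean_space set \<Rightarrow> 'a set" where
  "Omega C = sphere 0 1 \<inter> interior C"

definition radial :: "'a::euclidean_space set \<Rightarrow> 'a \<Rightarrow> real" where
  "radial AA u = Inf {r. r > 0 \<and> r *\<^sub>R u \<in> AA}"

definition radial_sum :: "'a::euclidean_space set \<Rightarrow> 'a set \<Rightarrow> 'a set \<Rightarrow> 'a set" where
  "radial_sum C AA1 AA2 =
     closure {l *\<^sub>R u | l u. u \<in> Omega C \<and> l \<ge> radial AA1 u + radial AA2 u}"

text \<open>Radial co-sum of the coconvex sets C - AA1 and C - AA2.\<close>
definition radial_cosum :: "'a::euclidean_space set \<Rightarrow> 'a set \<Rightarrow> 'a set \<Rightarrow> 'a set" where
  "radial_cosum C AA1 AA2 = C - radial_sum C AA1 AA2"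

text \<open>Co-sum of the coconvex sets C - AA1 and C - AA2 (via Minkowski sum).\<close>
definition co_sum :: "'a::euclidean_space set \<Rightarrow> 'a set \<Rightarrow> 'a set \<Rightarrow> 'a set" where
  "co_sum C AA1 AA2 = C - {a + b | a b. a \<in> AA1 \<and> b \<in> AA2}"

definition dilates :: "'a::euclidean_space set \<Rightarrow> 'a set \<Rightarrow> bool" where
  "dilates AA1 AA2 \<longleftrightarrow> (\<exists>l::real>0. AA2 = (\<lambda>x. l *\<^sub>R x) ` AA1)"

end

theory Submission
  imports Defs
begin


lemma emeasure_lborel_scale:
  fixes S :: "'a::euclidean_space set"
  assumes S: "S \<in> sets lborel" and c: "c > 0"
  shows "emeasure lborel ((\<lambda>x. c *\<^sub>R x) ` S) = ennreal (c ^ DIM('a)) * emeasure lborel S"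
proof -
  have img: "(\<lambda>x. c *\<^sub>R x) ` S = (\<lambda>x. inverse c *\<^sub>R x) -` S"
    using c by (auto simp: image_iff intro!: bexI[where x="inverse c *\<^sub>R _"])
  have meas: "(\<lambda>x. c *\<^sub>R x) ` S \<in> sets lborel"
    unfolding img using measurable_sets_borel[of "\<lambda>x. inverse c *\<^sub>R x" borel S] S by simp
  have pre: "(\<lambda>x. 0 + c *\<^sub>R x) -` ((\<lambda>x. c *\<^sub>R x) ` S) = S"
    using c by auto
  have "emeasure lborel ((\<lambda>x. c *\<^sub>R x) ` S) =
        emeasure (density (distr lborel borel (\<lambda>x. 0 + c *\<^sub>R x)) (\<lambda>_. \<bar>c\<bar>^DIM('a))) ((\<lambda>x. c *\<^sub>R x) ` S)"
    using lborel_affine[of c 0] c by (metis less_irrefl)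
  also have "\<dots> = ennreal (c ^ DIM('a)) * emeasure lborel S"
    using meas c pre by (simp add: emeasure_density nn_integral_cmult_indicator emeasure_distr)
  finally show ?thesis .
qed


lemma open_lt_on:
  fixes f g :: "'a::topological_space \<Rightarrow> real"
  assumes "open W" "continuous_on W f" "continuous_on W g"
  shows "open {p\<in>W. f p < g p}"
proof -
  have e: "{p\<in>W. f p < g p} = (\<lambda>p. g p - f p) -` {0<..} \<inter> W" by auto
  have "continuous_on W (\<lambda>p. g p - f p)" using assms by (intro continuous_intros)
  then show ?thesis unfolding e using assms(1) continuous_on_open_vimage[of W] open_greaterThan by blast
qed
lemma norm_pow_lt1: "norm (x::'a::real_normed_vector) < 1 \<longleftrightarrow> norm x ^ DIM('b::euclidean_space) < 1"
  by (metis DIM_positive not_gr0 norm_ge_zero power_less_one_iff)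

lemma W1open:
  fixes U :: "'a::euclidean_space set" and H :: "'a \<Rightarrow> real"
  assumes "open U" "continuous_on U H"
  shows "open {(x,s::real). x\<in>U \<and> norm x < 1 \<and> 0 < s \<and> s < H x}"
        "open {(x,s::real). x\<in>U \<and> norm x ^ DIM('a) < s \<and> s < H x}"
        "open {(x,t::real). x\<in>U \<and> 0 < t \<and> t < 1 \<and> norm x ^ DIM('a) < t * H x}"
proof -
  have c: "continuous_on (U \<times> UNIV) (\<lambda>p. H (fst p))"
    by (rule continuous_on_compose2[OF assms(2)]) (auto intro!: continuous_intros)
  have o: "open (U \<times> (UNIV::real set))" using assms by (simp add: open_Times)
  have 1: "open {p\<in>U \<times> UNIV. snd p < H (fst p)}"
    by (rule open_lt_on[OF o]) (auto intro!: continuous_intros c)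
  have 2: "open {p\<in>U \<times> UNIV. norm (fst p) ^ DIM('a) < snd p}"
    by (rule open_lt_on[OF o]) (auto intro!: continuous_intros)
  have 3: "open {p\<in>U \<times> UNIV. norm (fst p) ^ DIM('a) < snd p * H (fst p)}"
    by (rule open_lt_on[OF o]) (auto intro!: continuous_intros c)
  have 4: "open {p::'a\<times>real. norm (fst p) < 1}" "open {p::'a\<times>real. 0 < snd p}" "open {p::'a\<times>real. snd p < 1}"
    by (auto intro!: open_Collect_less continuous_intros)
  have "{(x,s::real). x\<in>U \<and> norm x < 1 \<and> 0 < s \<and> s < H x} =
        {p\<in>U \<times> UNIV. snd p < H (fst p)} \<inter> {p. norm (fst p) < 1} \<inter> {p. 0 < snd p}" by auto
  then show "open {(x,s::real). x\<in>U \<and> norm x < 1 \<and> 0 < s \<and> s < H x}" using 1 4 by auto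
  have "{(x,s::real). x\<in>U \<and> norm x ^ DIM('a) < s \<and> s < H x} =
        {p\<in>U \<times> UNIV. snd p < H (fst p)} \<inter> {p\<in>U \<times> UNIV. norm (fst p) ^ DIM('a) < snd p}" by auto
  then show "open {(x,s::real). x\<in>U \<and> norm x ^ DIM('a) < s \<and> s < H x}" using 1 2 by auto
  have "{(x,t::real). x\<in>U \<and> 0 < t \<and> t < 1 \<and> norm x ^ DIM('a) < t * H x} =
        {p\<in>U \<times> UNIV. norm (fst p) ^ DIM('a) < snd p * H (fst p)} \<inter> {p. 0 < snd p} \<inter> {p. snd p < 1}" by auto
  then show "open {(x,t::real). x\<in>U \<and> 0 < t \<and> t < 1 \<and> norm x ^ DIM('a) < t * H x}" using 3 4 by auto
qed


lemma sets_lborel_pair_open: "open (S::('a::euclidean_space \<times> 'b::euclidean_space) set) \<Longrightarrow> S \<in> sets (lborel \<Otimes>\<^sub>M lborel)"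
  unfolding lborel_prod by simp

lemma polar:
  fixes U :: "'a::euclidean_space set" and H :: "'a \<Rightarrow> real"
  assumes U: "open U" "0 \<notin> U" "\<And>x c. x \<in> U \<Longrightarrow> c > 0 \<Longrightarrow> c *\<^sub>R x \<in> U"
    and H: "continuous_on U H" "\<And>x c. x \<in> U \<Longrightarrow> c > 0 \<Longrightarrow> H (c *\<^sub>R x) = H x"
  shows "emeasure lborel {x\<in>U. norm x ^ DIM('a) < H x}
          = (\<integral>\<^sup>+x. indicator {x\<in>U. norm x < 1} x * ennreal (H x) \<partial>lborel)"
proof -
  define N where "N = DIM('a)"
  have N: "N > 0" by (simp add: N_def)
  define W1 where "W1 = {(x,s::real). x\<in>U \<and> norm x < 1 \<and> 0 < s \<and> s < H x}"
  define W2 where "W2 = {(x,s::real). x\<in>U \<and> norm x ^ N < s \<and> s < H x}"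
  define W3 where "W3 = {(x,t::real). x\<in>U \<and> 0 < t \<and> t < 1 \<and> norm x ^ N < t * H x}"
  have oW: "open W1" "open W2" "open W3" using W1open[OF U(1) H(1)] by (simp_all add: W1_def W2_def W3_def N_def)
  have mW[measurable]: "W1 \<in> sets (lborel \<Otimes>\<^sub>M lborel)" "W2 \<in> sets (lborel \<Otimes>\<^sub>M lborel)" "W3 \<in> sets (lborel \<Otimes>\<^sub>M lborel)"
    using oW by (simp_all only: sets_lborel_pair_open)
  have mf: "(\<lambda>p. ennreal (1 / snd p) * indicator W p) \<in> borel_measurable (lborel \<Otimes>\<^sub>M lborel)"
    if "W \<in> sets (lborel \<Otimes>\<^sub>M lborel)" for W :: "('a \<times> real) set"
  proof (rule borel_measurable_times_ennreal)
    show "(\<lambda>p. indicator W p) \<in> borel_measurable (lborel \<Otimes>\<^sub>M lborel)"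
      using that by (rule borel_measurable_indicator)
    have "(\<lambda>s::real. ennreal (1 / s)) \<in> borel_measurable lborel" by simp
    then show "(\<lambda>p. ennreal (1 / snd p)) \<in> borel_measurable (lborel \<Otimes>\<^sub>M lborel)"
      by (rule measurable_compose[OF measurable_snd])
  qed
  define St where "St = {x\<in>U. norm x ^ N < H x}"
  have oSt: "open St" unfolding St_def by (rule open_lt_on[OF U(1)]) (auto intro!: continuous_intros H)
  have sec_meas: "{x. (x,s) \<in> W} \<in> sets lborel" if "open W" for W and s :: real
  proof -
    have "open ((\<lambda>x. (x,s)) -` W)" by (rule continuous_open_vimage[OF that]) (auto intro!: continuous_intros)
    then show ?thesis by (simp add: vimage_def)
  qed
  have s1: "indicator {x\<in>U. norm x < 1} x * ennreal (H x) = (\<integral>\<^sup>+s. indicator W1 (x,s) \<partial>lborel)" for x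
  proof (cases "x \<in> U \<and> norm x < 1")
    case True
    have "(\<integral>\<^sup>+s. indicator W1 (x,s) \<partial>lborel) = (\<integral>\<^sup>+s. indicator {0<..<H x} s \<partial>lborel)"
      using True by (intro nn_integral_cong) (auto simp: W1_def indicator_def)
    also have "\<dots> = ennreal (H x)"
    proof (cases "H x \<ge> 0")
      case True then show ?thesis by simp
    next
      case False then have "{0<..<H x} = {}" by auto
      with False show ?thesis by (simp add: ennreal_neg)
    qed
    finally show ?thesis using True by simp
  next
    case False
    then have "\<And>s. indicator W1 (x,s) = (0::ennreal)" by (auto simp: W1_def indicator_def)
    then show ?thesis using False by simp
  qed
  have "(\<integral>\<^sup>+x. indicator {x\<in>U. norm x < 1} x * ennreal (H x) \<partial>lborel)
      = (\<integral>\<^sup>+x. \<integral>\<^sup>+s. indicator W1 (x,s) \<partial>lborel \<partial>lborel)" by (simp add: s1)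
  also have "\<dots> = (\<integral>\<^sup>+s. \<integral>\<^sup>+x. indicator W1 (x,s) \<partial>lborel \<partial>lborel)"
    by (rule lborel_pair.Fubini'[symmetric]) (use borel_measurable_indicator[OF mW(1)] in \<open>simp add: split_beta'\<close>)
  also have "\<dots> = (\<integral>\<^sup>+s. ennreal (1/s) * \<integral>\<^sup>+x. indicator W2 (x,s) \<partial>lborel \<partial>lborel)"
  proof (rule nn_integral_cong)
    fix s :: real
    have e1: "(\<integral>\<^sup>+x. indicator W1 (x,s) \<partial>lborel) = emeasure lborel {x. (x,s) \<in> W1}"
    proof -
      have "(\<lambda>x. indicator W1 (x,s)) = (indicator {x. (x,s) \<in> W1} :: 'a \<Rightarrow> ennreal)" by (auto simp: indicator_def)
      then show ?thesis using sec_meas[OF oW(1)] by simp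
    qed
    have e2: "(\<integral>\<^sup>+x. indicator W2 (x,s) \<partial>lborel) = emeasure lborel {x. (x,s) \<in> W2}"
    proof -
      have "(\<lambda>x. indicator W2 (x,s)) = (indicator {x. (x,s) \<in> W2} :: 'a \<Rightarrow> ennreal)" by (auto simp: indicator_def)
      then show ?thesis using sec_meas[OF oW(2)] by simp
    qed
    show "(\<integral>\<^sup>+x. indicator W1 (x,s) \<partial>lborel) = ennreal (1/s) * \<integral>\<^sup>+x. indicator W2 (x,s) \<partial>lborel"
    proof (cases "s > 0")
      case False
      have "{x. (x,s) \<in> W1} = {}" using False by (auto simp: W1_def)
      moreover have "{x. (x,s) \<in> W2} = {}"
      proof -
        have "\<not> norm x ^ N < s" for x
        proof -
          have "0 \<le> norm x ^ N" by simp
          then show ?thesis using False by linarith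
        qed
        then show ?thesis by (auto simp: W2_def)
      qed
      ultimately show ?thesis unfolding e1 e2 by simp
    next
      case True
      define c where "c = root N s"
      have c: "c > 0" "c ^ N = s" using True N by (simp_all add: c_def real_root_pow_pos2)
      have "{x. (x,s) \<in> W2} = (\<lambda>x. c *\<^sub>R x) ` {x. (x,s) \<in> W1}"
      proof (intro equalityI subsetI)
        fix x assume "x \<in> {x. (x,s) \<in> W2}"
        then have x: "x \<in> U" "norm x ^ N < s" "s < H x" by (auto simp: W2_def)
        have "inverse c *\<^sub>R x \<in> U" using U(3)[OF x(1)] c by simp
        moreover have "norm (inverse c *\<^sub>R x) ^ N < 1"
          using x c True by (simp add: power_mult_distrib power_inverse field_simps)
        then have "norm (inverse c *\<^sub>R x) < 1" using N by (metis norm_ge_zero power_less_one_iff not_gr0)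
        moreover have "H (inverse c *\<^sub>R x) = H x" using H(2)[OF x(1)] c by simp
        ultimately have "inverse c *\<^sub>R x \<in> {x. (x,s) \<in> W1}" using x True by (auto simp: W1_def)
        moreover have "x = c *\<^sub>R (inverse c *\<^sub>R x)" using c by simp
        ultimately show "x \<in> (\<lambda>x. c *\<^sub>R x) ` {x. (x,s) \<in> W1}" by blast
      next
        fix x assume "x \<in> (\<lambda>x. c *\<^sub>R x) ` {x. (x,s) \<in> W1}"
        then obtain y where y: "x = c *\<^sub>R y" "y \<in> U" "norm y < 1" "s < H y" by (auto simp: W1_def)
        have "norm y ^ N < 1" using y N by (simp add: power_less_one_iff)
        then have "norm x ^ N < s" using y c True by (simp add: power_mult_distrib)
        moreover have "H x = H y" using y H(2) c by simp
        ultimately show "x \<in> {x. (x,s) \<in> W2}" using y U(3) c by (auto simp: W2_def)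
      qed
      then have "emeasure lborel {x. (x,s) \<in> W2} = ennreal s * emeasure lborel {x. (x,s) \<in> W1}"
        using emeasure_lborel_scale[OF sec_meas[OF oW(1)] c(1)] c by (simp add: N_def)
      then show ?thesis unfolding e1 e2 using True
        by (simp add: mult.assoc[symmetric] ennreal_mult'[symmetric])
    qed
  qed
  also have "\<dots> = (\<integral>\<^sup>+s. \<integral>\<^sup>+x. ennreal (1/s) * indicator W2 (x,s) \<partial>lborel \<partial>lborel)"
  proof (intro nn_integral_cong nn_integral_cmult[symmetric])
    fix s :: real
    show "(\<lambda>x. indicator W2 (x, s)) \<in> borel_measurable lborel"
      using sec_meas[OF oW(2), of s] by (simp add: indicator_def[abs_def] split_beta)
  qed
  also have "\<dots> = (\<integral>\<^sup>+x. \<integral>\<^sup>+s. ennreal (1/s) * indicator W2 (x,s) \<partial>lborel \<partial>lborel)"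
    by (rule lborel_pair.Fubini') (use mf[OF mW(2)] in \<open>simp add: split_beta'\<close>)
  also have "\<dots> = (\<integral>\<^sup>+x. \<integral>\<^sup>+t. ennreal (1/t) * indicator W3 (x,t) \<partial>lborel \<partial>lborel)"
  proof (rule nn_integral_cong)
    fix x :: 'a
    show "(\<integral>\<^sup>+s. ennreal (1/s) * indicator W2 (x,s) \<partial>lborel) = (\<integral>\<^sup>+t. ennreal (1/t) * indicator W3 (x,t) \<partial>lborel)"
    proof (cases "x \<in> U \<and> H x > 0")
      case False
      have z2: "indicator W2 (x,s) = (0::ennreal)" for s
      proof -
        have "(x,s) \<notin> W2"
        proof
          assume "(x,s) \<in> W2"
          then have "x \<in> U" "norm x ^ N < s" "s < H x" by (auto simp: W2_def)
          moreover have "0 \<le> norm x ^ N" by simp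
          ultimately show False using False by linarith
        qed
        then show ?thesis by simp
      qed
      have z3: "indicator W3 (x,t) = (0::ennreal)" for t
      proof -
        have "(x,t) \<notin> W3"
        proof
          assume "(x,t) \<in> W3"
          then have h: "x \<in> U" "0 < t" "norm x ^ N < t * H x" by (auto simp: W3_def)
          then have "H x \<le> 0" using False by auto
          then have "t * H x \<le> 0" using h(2) by (simp add: mult_nonneg_nonpos)
          moreover have "0 \<le> norm x ^ N" by simp
          ultimately show False using h by linarith
        qed
        then show ?thesis by simp
      qed
      show ?thesis by (simp add: z2 z3)
    next
      case True
      define b where "b = H x"
      have b: "b > 0" using True by (simp add: b_def)
      have mW2s: "(\<lambda>s. ennreal (1/s) * indicator W2 (x,s)) \<in> borel_measurable borel"
      proof -
        have "(\<lambda>s. indicator W2 (x, s) :: ennreal) \<in> borel_measurable borel"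
        proof -
          have "open ((\<lambda>s. (x,s)) -` W2)" by (rule continuous_open_vimage[OF oW(2)]) (auto intro!: continuous_intros)
          then have "(\<lambda>s. (x,s)) -` W2 \<in> sets borel" by simp
          then have "indicator ((\<lambda>s. (x,s)) -` W2) \<in> borel_measurable (borel :: real measure)" by (rule borel_measurable_indicator)
          then show ?thesis by (simp add: indicator_def[abs_def])
        qed
        then show ?thesis by measurable
      qed
      have eqW: "(x, b * t) \<in> W2 \<longleftrightarrow> (x,t) \<in> W3" for t
      proof -
        have "(x, b * t) \<in> W2 \<longleftrightarrow> norm x ^ N < b * t \<and> b * t < b" using True by (simp add: W2_def b_def)
        also have "\<dots> \<longleftrightarrow> 0 < t \<and> t < 1 \<and> norm x ^ N < t * b"
        proof -
          have a: "0 \<le> norm x ^ N" by simp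
          have i1: "b*t < b \<longleftrightarrow> t < 1" using b by (metis mult.right_neutral mult_less_cancel_left_pos)
          have i2: "norm x ^ N < b * t \<Longrightarrow> 0 < t" using a b by (metis less_le_trans zero_less_mult_iff order_less_le not_less)
          show ?thesis using i1 i2 by (auto simp: mult.commute)
        qed
        finally show ?thesis using True by (simp add: W3_def b_def)
      qed
      have "(\<integral>\<^sup>+s. ennreal (1/s) * indicator W2 (x,s) \<partial>lborel)
          = ennreal \<bar>b\<bar> * (\<integral>\<^sup>+t. ennreal (1/(0 + b * t)) * indicator W2 (x, 0 + b * t) \<partial>lborel)"
        by (rule nn_integral_real_affine[OF mW2s]) (use b in simp)
      also have "\<dots> = (\<integral>\<^sup>+t. ennreal b * (ennreal (1/(b * t)) * indicator W2 (x, b * t)) \<partial>lborel)"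
        using b by (simp add: nn_integral_cmult)
      also have "\<dots> = (\<integral>\<^sup>+t. ennreal (1/t) * indicator W3 (x,t) \<partial>lborel)"
      proof (rule nn_integral_cong)
        fix t :: real
        show "ennreal b * (ennreal (1/(b * t)) * indicator W2 (x, b * t)) = ennreal (1/t) * indicator W3 (x,t)"
        proof (cases "(x,t) \<in> W3")
          case True
          then have "t > 0" by (simp add: W3_def)
          then have "ennreal b * ennreal (1/(b * t)) = ennreal (1/t)" using b by (simp add: ennreal_mult'[symmetric])
          then show ?thesis using True eqW[of t] by simp
        next
          case False then show ?thesis using eqW[of t] by simp
        qed
      qed
      finally show ?thesis .
    qed
  qed
  also have "\<dots> = (\<integral>\<^sup>+t. \<integral>\<^sup>+x. ennreal (1/t) * indicator W3 (x,t) \<partial>lborel \<partial>lborel)"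
    by (rule lborel_pair.Fubini'[symmetric]) (use mf[OF mW(3)] in \<open>simp add: split_beta'\<close>)
  also have "\<dots> = (\<integral>\<^sup>+t. emeasure lborel St * indicator {0<..<1::real} t \<partial>lborel)"
  proof (rule nn_integral_cong)
    fix t :: real
    have e3: "(\<integral>\<^sup>+x. ennreal (1/t) * indicator W3 (x,t) \<partial>lborel) = ennreal (1/t) * emeasure lborel {x. (x,t) \<in> W3}"
    proof -
      have "(\<lambda>x. indicator W3 (x,t)) = (indicator {x. (x,t) \<in> W3} :: 'a \<Rightarrow> ennreal)" by (auto simp: indicator_def)
      then show ?thesis using sec_meas[OF oW(3)] by (simp add: nn_integral_cmult)
    qed
    show "(\<integral>\<^sup>+x. ennreal (1/t) * indicator W3 (x,t) \<partial>lborel) = emeasure lborel St * indicator {0<..<1::real} t"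
    proof (cases "0 < t \<and> t < 1")
      case False
      then have "{x. (x,t) \<in> W3} = {}" by (auto simp: W3_def)
      then show ?thesis unfolding e3 using False by simp
    next
      case True
      define c where "c = root N t"
      have c: "c > 0" "c ^ N = t" using True N by (simp_all add: c_def real_root_pow_pos2)
      have "{x. (x,t) \<in> W3} = (\<lambda>x. c *\<^sub>R x) ` St"
      proof (intro equalityI subsetI)
        fix x assume "x \<in> {x. (x,t) \<in> W3}"
        then have x: "x \<in> U" "norm x ^ N < t * H x" by (auto simp: W3_def)
        have "inverse c *\<^sub>R x \<in> U" using U(3)[OF x(1)] c by simp
        moreover have "H (inverse c *\<^sub>R x) = H x" using H(2)[OF x(1)] c by simp
        moreover have "norm (inverse c *\<^sub>R x) ^ N < H x"
          using x c True by (simp add: power_mult_distrib power_inverse field_simps)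
        ultimately have "inverse c *\<^sub>R x \<in> St" by (auto simp: St_def)
        moreover have "x = c *\<^sub>R (inverse c *\<^sub>R x)" using c by simp
        ultimately show "x \<in> (\<lambda>x. c *\<^sub>R x) ` St" by blast
      next
        fix x assume "x \<in> (\<lambda>x. c *\<^sub>R x) ` St"
        then obtain y where y: "x = c *\<^sub>R y" "y \<in> U" "norm y ^ N < H y" by (auto simp: St_def)
        have "H x = H y" using y H(2) c by simp
        moreover have "norm x ^ N < t * H y" using y c True by (simp add: power_mult_distrib)
        ultimately show "x \<in> {x. (x,t) \<in> W3}" using y U(3) c True by (auto simp: W3_def)
      qed
      then have "emeasure lborel {x. (x,t) \<in> W3} = ennreal t * emeasure lborel St"
        using emeasure_lborel_scale[OF _ c(1), of St] oSt c by (simp add: N_def)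
      then show ?thesis unfolding e3 using True
        by (simp add: mult.assoc[symmetric] ennreal_mult'[symmetric])
    qed
  qed
  also have "\<dots> = emeasure lborel St" by (simp add: nn_integral_cmult)
  finally show ?thesis by (simp add: St_def N_def)
qed


locale cclose =
  fixes C AA :: "'a::euclidean_space set"
  assumes pc: "pointed_cone C" and cc: "C_close C AA"
begin

abbreviation "U \<equiv> interior C"
abbreviation "R \<equiv> radial AA"

lemma C_cone: "x \<in> C \<Longrightarrow> c \<ge> 0 \<Longrightarrow> c *\<^sub>R x \<in> C"
  using pc unfolding pointed_cone_def convex_cone_def conic_def by blast

lemma C_convex: "convex C" using pc unfolding pointed_cone_def convex_cone_def by blast
lemma C_closed: "closed C" using pc unfolding pointed_cone_def by blast
lemma C_pointed: "C \<inter> uminus ` C = {0}" using pc unfolding pointed_cone_def by blast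
lemma U_ne: "U \<noteq> {}" using pc unfolding pointed_cone_def by blast

lemma AA_closed: "closed AA" and AA_convex: "convex AA" and AA_sub: "AA \<subseteq> C" and AA0: "0 \<notin> AA"
  and AA_scale: "x \<in> AA \<Longrightarrow> l \<ge> 1 \<Longrightarrow> l *\<^sub>R x \<in> AA" and AA_rec: "rec_cone AA = C"
  and AA_meas: "C - AA \<in> lmeasurable"
  using cc unfolding C_close_def by blast+

lemma U_scale: assumes "x \<in> U" "c > 0" shows "c *\<^sub>R x \<in> U"
proof -
  obtain e where e: "e > 0" "ball x e \<subseteq> C" using assms(1) by (meson mem_interior)
  have "ball (c *\<^sub>R x) (c * e) \<subseteq> C"
  proof
    fix y assume "y \<in> ball (c *\<^sub>R x) (c * e)"
    then have "dist (c *\<^sub>R x) y < c * e" by simp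
    have eq: "x - inverse c *\<^sub>R y = inverse c *\<^sub>R (c *\<^sub>R x - y)" using assms(2) by (simp add: algebra_simps)
    have "norm (c *\<^sub>R x - y) < c * e" using \<open>dist (c *\<^sub>R x) y < c * e\<close> by (simp add: dist_norm)
    then have "inverse c * norm (c *\<^sub>R x - y) < e" using assms(2) by (simp add: field_simps)
    then have "dist x (inverse c *\<^sub>R y) < e" using assms(2) by (simp add: dist_norm eq)
    then have "inverse c *\<^sub>R y \<in> C" using e by auto
    from C_cone[OF this, of c] show "y \<in> C" using assms(2) by simp
  qed
  then show ?thesis using e assms(2) by (meson mem_interior mult_pos_pos)
qed

lemma zero_notin_U: "0 \<notin> U"
proof
  assume "0 \<in> U"
  then obtain e where e: "e > 0" "ball 0 e \<subseteq> C" by (meson mem_interior)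
  obtain b :: 'a where b: "b \<in> Basis" using nonempty_Basis by blast
  define x where "x = (e/2) *\<^sub>R b"
  have nx: "norm x = e/2" using b e by (simp add: x_def)
  then have "x \<in> C" "-x \<in> C" using e by (auto simp: dist_norm)
  then have "x \<in> C \<inter> uminus ` C" by (metis IntI image_eqI minus_minus)
  then have "x = 0" using C_pointed by blast
  then show False using nx e by simp
qed

lemma AA_ne: "AA \<noteq> {}"
proof
  assume "AA = {}"
  then have "rec_cone AA = UNIV" by (simp add: rec_cone_def)
  then have CU: "C = UNIV" using AA_rec by simp
  obtain b :: 'a where b: "b \<in> Basis" using nonempty_Basis by blast
  have "b = - (- b)" by simp
  then have "b \<in> uminus ` C" unfolding CU by (rule image_eqI) simp
  then have "b \<in> C \<inter> uminus ` C" unfolding CU by simp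
  then have "b = 0" using C_pointed by simp
  then show False using b nonzero_Basis by blast
qed

lemma AA_delta: obtains d where "d > 0" "\<And>y. y \<in> AA \<Longrightarrow> d \<le> norm y"
proof -
  have o: "open (- AA)" using AA_closed by (simp add: open_Compl)
  have "0 \<in> - AA" using AA0 by simp
  then obtain d where d: "d > 0" "ball 0 d \<subseteq> - AA" using o open_contains_ball by blast
  show ?thesis
  proof (rule that[OF d(1)])
    fix y assume "y \<in> AA"
    then have "y \<notin> ball 0 d" using d by auto
    then show "d \<le> norm y" by (simp add: dist_norm)
  qed
qed

lemma ray_hits: assumes "x \<in> U" shows "\<exists>r>0. r *\<^sub>R x \<in> AA"
proof -
  obtain a where a: "a \<in> AA" using AA_ne by blast
  obtain e where e: "e > 0" "ball x e \<subseteq> C" using assms by (meson mem_interior)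
  define r where "r = (norm a + 1) / e"
  have "norm a + 1 > 0" by (simp add: add_nonneg_pos)
  then have r: "r > 0" using e by (simp add: r_def)
  have re: "r * e = norm a + 1" using e by (simp add: r_def)
  then have "norm a < r * e" by simp
  then have "norm a / r < e" using r by (simp add: pos_divide_less_eq mult.commute)
  then have "norm (inverse r *\<^sub>R a) < e"
    using r by (simp add: divide_inverse mult.commute)
  then have "x - inverse r *\<^sub>R a \<in> ball x e" by (simp add: dist_norm)
  then have "x - inverse r *\<^sub>R a \<in> C" using e by auto
  then have "r *\<^sub>R (x - inverse r *\<^sub>R a) \<in> C" by (rule C_cone) (use r in simp)
  then have y: "r *\<^sub>R x - a \<in> C" using r by (simp add: scaleR_right_diff_distrib)
  have "r *\<^sub>R x - a \<in> rec_cone AA" using y AA_rec by simp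
  then have "\<forall>z\<in>AA. \<forall>t::real\<ge>0. z + t *\<^sub>R (r *\<^sub>R x - a) \<in> AA" unfolding rec_cone_def by simp
  then have "a + 1 *\<^sub>R (r *\<^sub>R x - a) \<in> AA" using a by (meson zero_le_one)
  then show ?thesis using r by auto
qed

lemma pos_of_ray: assumes "x \<in> U" "r *\<^sub>R x \<in> AA" shows "r > 0"
proof (rule ccontr)
  assume "\<not> r > 0"
  then have r: "-r \<ge> 0" by simp
  have xC: "x \<in> C" using assms(1) interior_subset by blast
  have "r *\<^sub>R x \<in> C" using assms AA_sub by blast
  moreover have "(-r) *\<^sub>R x \<in> C" by (rule C_cone[OF xC r])
  then have "- (r *\<^sub>R x) \<in> C" by simp
  ultimately have "r *\<^sub>R x \<in> C \<inter> uminus ` C"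
    using image_eqI[of "r *\<^sub>R x" uminus "- (r *\<^sub>R x)" C] by simp
  then have "r *\<^sub>R x = 0" using C_pointed by blast
  then show False using assms(2) AA0 by metis
qed

lemma R_props: assumes x: "x \<in> U"
  shows "R x > 0" "R x *\<^sub>R x \<in> AA" "\<And>r. r *\<^sub>R x \<in> AA \<longleftrightarrow> R x \<le> r"
proof -
  obtain d where d: "d > 0" "\<And>y. y \<in> AA \<Longrightarrow> d \<le> norm y" using AA_delta by blast
  have x0: "x \<noteq> 0" using x zero_notin_U by auto
  define S where "S = {r. r *\<^sub>R x \<in> AA}"
  have SR: "{r. r > 0 \<and> r *\<^sub>R x \<in> AA} = S" using pos_of_ray[OF x] by (auto simp: S_def)
  have Rdef: "R x = Inf S" unfolding radial_def SR ..
  have lb: "r \<ge> d / norm x" if "r \<in> S" for r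
  proof -
    have "r > 0" using pos_of_ray[OF x] that by (simp add: S_def)
    moreover have "d \<le> norm (r *\<^sub>R x)" using d(2) that unfolding S_def by blast
    ultimately show ?thesis using x0 by (simp add: field_simps)
  qed
  have Sne: "S \<noteq> {}" using ray_hits[OF x] by (auto simp: S_def)
  have bdd: "bdd_below S" unfolding bdd_below_def using lb by blast
  have "closed S"
  proof -
    have "closed ((\<lambda>r::real. r *\<^sub>R x) -` AA)"
      by (rule continuous_closed_vimage[OF AA_closed]) (intro continuous_intros)
    then show ?thesis by (simp add: S_def vimage_def)
  qed
  then have IS: "Inf S \<in> S" using Sne bdd closed_contains_Inf by blast
  have "Inf S \<ge> d / norm x" using Sne lb by (simp add: cInf_greatest)
  moreover have "d / norm x > 0" using d x0 by simp
  ultimately show "R x > 0" using Rdef by linarith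
  show "R x *\<^sub>R x \<in> AA" using IS Rdef by (simp add: S_def)
  fix r
  show "r *\<^sub>R x \<in> AA \<longleftrightarrow> R x \<le> r"
  proof
    assume "r *\<^sub>R x \<in> AA"
    then show "R x \<le> r" using Rdef bdd by (simp add: S_def cInf_lower)
  next
    assume rr: "R x \<le> r"
    have Rp: "R x > 0" using \<open>R x > 0\<close> .
    have "1 \<le> r / R x" using rr Rp by simp
    then have "(r / R x) *\<^sub>R (R x *\<^sub>R x) \<in> AA" by (rule AA_scale[OF \<open>R x *\<^sub>R x \<in> AA\<close>])
    then show "r *\<^sub>R x \<in> AA" using Rp by simp
  qed
qed

lemma AA_iff: "x \<in> U \<Longrightarrow> x \<in> AA \<longleftrightarrow> R x \<le> 1"
  using R_props(3)[of x 1] by simp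

lemma R_scale: assumes "x \<in> U" "c > 0" shows "R (c *\<^sub>R x) = R x / c"
proof -
  have cx: "c *\<^sub>R x \<in> U" using U_scale assms by blast
  have "(R (c *\<^sub>R x) * c) *\<^sub>R x \<in> AA" using R_props(2)[OF cx] by simp
  then have 1: "R x \<le> R (c *\<^sub>R x) * c" using R_props(3)[OF assms(1)] by blast
  have "(R x / c) *\<^sub>R (c *\<^sub>R x) \<in> AA" using R_props(2)[OF assms(1)] assms(2) by simp
  then have 2: "R (c *\<^sub>R x) \<le> R x / c" using R_props(3)[OF cx] by blast
  show ?thesis using 1 2 assms(2) by (simp add: field_simps)
qed

lemma U_convex: "convex U" using C_convex by (rule convex_interior)

lemma f_concave: "concave_on U (\<lambda>x. 1 / R x)"
  unfolding concave_on_iff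
proof (intro conjI ballI allI impI U_convex)
  fix x y and u v :: real
  assume x: "x \<in> U" and y: "y \<in> U" and uv: "0 \<le> u" "0 \<le> v" "u + v = 1"
  define z where "z = u *\<^sub>R x + v *\<^sub>R y"
  have z: "z \<in> U" using U_convex x y uv unfolding z_def convex_def by blast
  define p where "p = 1 / R x"
  define q where "q = 1 / R y"
  have pq: "p > 0" "q > 0" using R_props(1)[OF x] R_props(1)[OF y] by (simp_all add: p_def q_def)
  define s where "s = u * p + v * q"
  have s: "s > 0" using pq uv unfolding s_def
    by (cases "u > 0") (auto intro: add_pos_nonneg add_nonneg_pos)
  have xa: "(1/p) *\<^sub>R x \<in> AA" using R_props(2)[OF x] by (simp add: p_def)
  have ya: "(1/q) *\<^sub>R y \<in> AA" using R_props(2)[OF y] by (simp add: q_def)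
  have "(u * p / s) *\<^sub>R ((1/p) *\<^sub>R x) + (v * q / s) *\<^sub>R ((1/q) *\<^sub>R y) \<in> AA"
  proof -
    have "u * p / s + v * q / s = 1" using s by (simp add: s_def add_divide_distrib[symmetric])
    moreover have "u * p / s \<ge> 0" "v * q / s \<ge> 0" using uv pq s by simp_all
    ultimately show ?thesis using AA_convex xa ya unfolding convex_def by blast
  qed
  moreover have "(u * p / s) *\<^sub>R ((1/p) *\<^sub>R x) + (v * q / s) *\<^sub>R ((1/q) *\<^sub>R y) = (1/s) *\<^sub>R z"
    using pq s by (simp add: z_def scaleR_add_right)
  ultimately have "(1/s) *\<^sub>R z \<in> AA" by simp
  then have "R z \<le> 1/s" using R_props(3)[OF z] by blast
  then have "s \<le> 1 / R z" using R_props(1)[OF z] s by (simp add: field_simps)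
  then show "u * (1 / R x) + v * (1 / R y) \<le> 1 / R (u *\<^sub>R x + v *\<^sub>R y)"
    by (simp add: s_def p_def q_def z_def)
qed

lemma R_cont: "continuous_on U R"
proof -
  have "convex_on U (\<lambda>x. - (1 / R x))" using f_concave by (simp add: concave_on_def)
  then have "continuous_on U (\<lambda>x. - (1 / R x))" by (rule convex_on_continuous[OF open_interior])
  then have c1: "continuous_on U (\<lambda>x. 1 / R x)" using continuous_on_minus by fastforce
  have nz: "\<forall>x\<in>U. 1 / R x \<noteq> 0"
  proof
    fix x assume "x \<in> U"
    then have "R x > 0" by (rule R_props(1))
    then show "1 / R x \<noteq> 0" by simp
  qed
  have "continuous_on U (\<lambda>x. 1 / (1 / R x))"
    by (rule continuous_on_divide[OF continuous_on_const c1 nz])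
  then show ?thesis by (rule continuous_on_eq) (use R_props(1) in auto)
qed

end


lemma pow_convex2:
  fixes l p q :: real and N :: nat
  assumes l: "0 \<le> l" "l \<le> 1" and pq: "0 \<le> p" "0 \<le> q"
  shows "(l * p + (1 - l) * q) ^ N \<le> l * p ^ N + (1 - l) * q ^ N"
proof (induction N)
  case 0 then show ?case by simp
next
  case (Suc N)
  define m where "m = l * p + (1 - l) * q"
  have m: "m \<ge> 0" using l pq by (simp add: m_def)
  have id: "l * p ^ Suc N + (1 - l) * q ^ Suc N - m * (l * p ^ N + (1 - l) * q ^ N)
      = l * (1 - l) * ((p - q) * (p ^ N - q ^ N))"
    by (simp add: m_def algebra_simps)
  have "0 \<le> (p - q) * (p ^ N - q ^ N)"
  proof (cases "p \<le> q")
    case True then have "p ^ N \<le> q ^ N" using pq by (simp add: power_mono)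
    then show ?thesis using True by (simp add: mult_nonpos_nonpos)
  next
    case False then have "q ^ N \<le> p ^ N" using pq by (simp add: power_mono)
    then show ?thesis using False by simp
  qed
  then have "0 \<le> l * (1 - l) * ((p - q) * (p ^ N - q ^ N))" using l by simp
  then have 1: "m * (l * p ^ N + (1 - l) * q ^ N) \<le> l * p ^ Suc N + (1 - l) * q ^ Suc N"
    using id by linarith
  have "m ^ Suc N = m * m ^ N" by simp
  also have "\<dots> \<le> m * (l * p ^ N + (1 - l) * q ^ N)"
    using Suc m unfolding m_def by (simp add: mult_left_mono)
  finally show ?case using 1 unfolding m_def by linarith
qed

lemma pow_strict_convex2:
  fixes l p q :: real and N :: nat
  assumes l: "0 < l" "l < 1" and pq: "0 \<le> p" "0 \<le> q" "p \<noteq> q" and N: "N \<ge> 2"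
  shows "(l * p + (1 - l) * q) ^ N < l * p ^ N + (1 - l) * q ^ N"
  using N
proof (induction N rule: dec_induct)
  case base
  have "l * p\<^sup>2 + (1 - l) * q\<^sup>2 - (l * p + (1 - l) * q)\<^sup>2 = l * (1 - l) * (p - q)\<^sup>2"
    by (simp add: algebra_simps power2_eq_square)
  moreover have "l * (1 - l) * (p - q)\<^sup>2 > 0" using l pq by simp
  ultimately show ?case by linarith
next
  case (step N)
  define m where "m = l * p + (1 - l) * q"
  have m: "m > 0" using l pq unfolding m_def
    by (cases "p > 0") (auto intro: add_pos_nonneg add_nonneg_pos)
  have id: "l * p ^ Suc N + (1 - l) * q ^ Suc N - m * (l * p ^ N + (1 - l) * q ^ N)
      = l * (1 - l) * ((p - q) * (p ^ N - q ^ N))"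
    by (simp add: m_def algebra_simps)
  have "0 \<le> (p - q) * (p ^ N - q ^ N)"
  proof (cases "p \<le> q")
    case True then have "p ^ N \<le> q ^ N" using pq by (simp add: power_mono)
    then show ?thesis using True by (simp add: mult_nonpos_nonpos)
  next
    case False then have "q ^ N \<le> p ^ N" using pq by (simp add: power_mono)
    then show ?thesis using False by simp
  qed
  then have "0 \<le> l * (1 - l) * ((p - q) * (p ^ N - q ^ N))" using l by simp
  then have 1: "m * (l * p ^ N + (1 - l) * q ^ N) \<le> l * p ^ Suc N + (1 - l) * q ^ Suc N"
    using id by linarith
  have "m ^ Suc N = m * m ^ N" by simp
  also have "\<dots> < m * (l * p ^ N + (1 - l) * q ^ N)"
    using step m unfolding m_def by simp
  finally show ?case using 1 unfolding m_def by linarith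
qed



lemma meas_ind:
  fixes B :: "'a::euclidean_space set" and g :: "'a \<Rightarrow> real"
  assumes "open B" "continuous_on B g"
  shows "(\<lambda>x. ennreal (indicator B x * g x)) \<in> borel_measurable lborel"
proof -
  have "(\<lambda>x. indicator B x *\<^sub>R g x) \<in> borel_measurable borel"
    using assms by (intro borel_measurable_continuous_on_indicator) auto
  then have "(\<lambda>x. indicator B x * g x) \<in> borel_measurable borel" by simp
  then show ?thesis by simp
qed

lemma core:
  fixes B :: "'a::euclidean_space set" and f1 f2 :: "'a \<Rightarrow> real" and N :: nat
  assumes B: "open B" and c1: "continuous_on B f1" and c2: "continuous_on B f2"
    and p1: "\<And>x. x \<in> B \<Longrightarrow> f1 x > 0" and p2: "\<And>x. x \<in> B \<Longrightarrow> f2 x > 0"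
    and N: "N \<ge> 1"
    and I1: "(\<integral>\<^sup>+x. ennreal (indicator B x * f1 x ^ N) \<partial>lborel) = ennreal v1"
    and I2: "(\<integral>\<^sup>+x. ennreal (indicator B x * f2 x ^ N) \<partial>lborel) = ennreal v2"
    and v: "v1 > 0" "v2 > 0"
  shows "(\<integral>\<^sup>+x. ennreal (indicator B x * (f1 x + f2 x) ^ N) \<partial>lborel) \<le> ennreal ((root N v1 + root N v2) ^ N)"
    and "N \<ge> 2 \<Longrightarrow> (\<integral>\<^sup>+x. ennreal (indicator B x * (f1 x + f2 x) ^ N) \<partial>lborel) = ennreal ((root N v1 + root N v2) ^ N)
         \<Longrightarrow> \<forall>x\<in>B. f2 x = (root N v2 / root N v1) * f1 x"
proof -
  define a where "a = root N v1"
  define b where "b = root N v2"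
  have N0: "N > 0" using N by simp
  have ab: "a > 0" "b > 0" using v N0 by (simp_all add: a_def b_def)
  have aN: "a ^ N = v1" "b ^ N = v2" using v N0 by (simp_all add: a_def b_def real_root_pow_pos2)
  define l where "l = a / (a + b)"
  have l: "0 < l" "l < 1" "1 - l = b / (a + b)" using ab by (simp_all add: l_def field_simps)
  define F where "F x = indicator B x * (f1 x + f2 x) ^ N" for x
  define G where "G x = indicator B x * ((a+b)^N * (l * (f1 x ^ N / v1) + (1 - l) * (f2 x ^ N / v2)))" for x
  have pt: "(f1 x + f2 x) = (a + b) * (l * (f1 x / a) + (1 - l) * (f2 x / b))" for x
  proof -
    have e1: "(a+b) * (l * (f1 x / a)) = f1 x" using ab by (simp add: l_def)
    have e2: "(a+b) * ((1-l) * (f2 x / b)) = f2 x" using ab by (simp add: l(3))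
    show ?thesis by (simp only: distrib_left e1 e2)
  qed
  have pw: "(l * (f1 x / a) + (1 - l) * (f2 x / b)) ^ N \<le> l * (f1 x / a) ^ N + (1 - l) * (f2 x / b) ^ N"
    if "x \<in> B" for x
    using pow_convex2[of l "f1 x / a" "f2 x / b" N] l ab p1[OF that] p2[OF that] by simp
  have FG: "F x \<le> G x" for x
  proof (cases "x \<in> B")
    case True
    have "(f1 x + f2 x) ^ N = (a+b)^N * (l * (f1 x / a) + (1 - l) * (f2 x / b)) ^ N"
      by (subst pt) (simp add: power_mult_distrib)
    also have "\<dots> \<le> (a+b)^N * (l * (f1 x / a) ^ N + (1 - l) * (f2 x / b) ^ N)"
      using pw[OF True] ab by (simp add: mult_left_mono)
    also have "\<dots> = (a+b)^N * (l * (f1 x ^ N / v1) + (1 - l) * (f2 x ^ N / v2))"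
      by (simp add: power_divide aN)
    finally show ?thesis using True by (simp add: F_def G_def)
  qed (simp add: F_def G_def)
  have F0: "F x \<ge> 0" for x using p1 p2 by (simp add: F_def indicator_def add_pos_pos less_imp_le)
  have cont1: "continuous_on B (\<lambda>x. f1 x ^ N)" "continuous_on B (\<lambda>x. f2 x ^ N)"
    using c1 c2 by (auto intro!: continuous_intros)
  have contF: "continuous_on B (\<lambda>x. (f1 x + f2 x) ^ N)" using c1 c2 by (auto intro!: continuous_intros)
  define c1' where "c1' = (a+b)^N * l / v1"
  define c2' where "c2' = (a+b)^N * (1 - l) / v2"
  have c': "c1' \<ge> 0" "c2' \<ge> 0" using ab l v by (simp_all add: c1'_def c2'_def)
  have Gsplit: "ennreal (G x) = ennreal c1' * ennreal (indicator B x * f1 x ^ N) + ennreal c2' * ennreal (indicator B x * f2 x ^ N)" for x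
  proof (cases "x \<in> B")
    case True
    have nn: "f1 x ^ N \<ge> 0" "f2 x ^ N \<ge> 0" using p1[OF True] p2[OF True] by simp_all
    have "G x = c1' * f1 x ^ N + c2' * f2 x ^ N" using True by (simp add: G_def c1'_def c2'_def algebra_simps)
    then show ?thesis using True nn c' by (simp add: ennreal_plus[symmetric] ennreal_mult'[symmetric] del: ennreal_plus)
  qed (simp add: G_def)
  have m1: "(\<lambda>x. ennreal (indicator B x * f1 x ^ N)) \<in> borel_measurable lborel" by (rule meas_ind[OF B cont1(1)])
  have m2: "(\<lambda>x. ennreal (indicator B x * f2 x ^ N)) \<in> borel_measurable lborel" by (rule meas_ind[OF B cont1(2)])
  have mF: "(\<lambda>x. ennreal (F x)) \<in> borel_measurable lborel" unfolding F_def by (rule meas_ind[OF B contF])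
  have IG: "(\<integral>\<^sup>+x. ennreal (G x) \<partial>lborel) = ennreal ((a+b)^N)"
  proof -
    have "(\<integral>\<^sup>+x. ennreal (G x) \<partial>lborel) = ennreal c1' * ennreal v1 + ennreal c2' * ennreal v2"
      unfolding Gsplit using m1 m2 by (simp add: nn_integral_add nn_integral_cmult I1 I2)
    also have "\<dots> = ennreal (c1' * v1 + c2' * v2)" using c' v by (simp add: ennreal_plus ennreal_mult')
    also have "c1' * v1 + c2' * v2 = (a+b)^N"
    proof -
      have "c1' * v1 = (a+b)^N * l" using v by (simp add: c1'_def)
      moreover have "c2' * v2 = (a+b)^N * (1 - l)" using v by (simp add: c2'_def)
      ultimately show ?thesis by (simp add: algebra_simps)
    qed
    finally show ?thesis .
  qed
  have IF_le: "(\<integral>\<^sup>+x. ennreal (F x) \<partial>lborel) \<le> ennreal ((a+b)^N)"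
    unfolding IG[symmetric] by (intro nn_integral_mono ennreal_leI FG)
  then show "(\<integral>\<^sup>+x. ennreal (indicator B x * (f1 x + f2 x) ^ N) \<partial>lborel) \<le> ennreal ((root N v1 + root N v2) ^ N)"
    by (simp add: F_def a_def b_def)
  assume N2: "N \<ge> 2"
  assume eq: "(\<integral>\<^sup>+x. ennreal (indicator B x * (f1 x + f2 x) ^ N) \<partial>lborel) = ennreal ((root N v1 + root N v2) ^ N)"
  then have eqF: "(\<integral>\<^sup>+x. ennreal (F x) \<partial>lborel) = ennreal ((a+b)^N)" by (simp add: F_def a_def b_def)
  have mD: "(\<lambda>x. ennreal (G x - F x)) \<in> borel_measurable lborel"
  proof -
    have "continuous_on B (\<lambda>x. (a+b)^N * (l * (f1 x ^ N / v1) + (1 - l) * (f2 x ^ N / v2)) - (f1 x + f2 x) ^ N)"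
      using c1 c2 v by (auto intro!: continuous_intros)
    from meas_ind[OF B this] show ?thesis
      by (simp add: G_def F_def right_diff_distrib)
  qed
  have "(\<integral>\<^sup>+x. ennreal (G x) \<partial>lborel) = (\<integral>\<^sup>+x. ennreal (F x) + ennreal (G x - F x) \<partial>lborel)"
    by (intro nn_integral_cong) (simp add: F0 FG ennreal_plus[symmetric] del: ennreal_plus)
  also have "\<dots> = (\<integral>\<^sup>+x. ennreal (F x) \<partial>lborel) + (\<integral>\<^sup>+x. ennreal (G x - F x) \<partial>lborel)"
    using mF mD by (simp add: nn_integral_add)
  finally have "ennreal ((a+b)^N) + (\<integral>\<^sup>+x. ennreal (G x - F x) \<partial>lborel) = ennreal ((a+b)^N) + 0"
    using IG eqF by simp
  then have "(\<integral>\<^sup>+x. ennreal (G x - F x) \<partial>lborel) = 0" by (simp add: ennreal_add_left_cancel)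
  then have AE: "AE x in lborel. ennreal (G x - F x) = 0" using mD by (simp add: nn_integral_0_iff_AE)
  define D where "D = {x\<in>B. (f1 x + f2 x) ^ N < (a+b)^N * (l * (f1 x ^ N / v1) + (1 - l) * (f2 x ^ N / v2))}"
  have oD: "open D" unfolding D_def
    by (rule open_lt_on[OF B]) (use c1 c2 v in \<open>auto intro!: continuous_intros\<close>)
  have "{x\<in>space lborel. \<not> ennreal (G x - F x) = 0} = D"
    by (auto simp: D_def G_def F_def not_le ennreal_eq_0_iff split: split_indicator)
  then have "emeasure lborel D = 0" using AE AE_iff_measurable[of D lborel] oD by auto
  then have "D \<in> null_sets lborel" using oD by (simp add: null_sets_def)
  then have "D \<in> null_sets lebesgue" by (rule null_sets_completionI)
  then have "negligible D" by (simp add: negligible_iff_null_sets)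
  then have D0: "D = {}" using open_not_negligible[OF oD] by blast
  show "\<forall>x\<in>B. f2 x = (root N v2 / root N v1) * f1 x"
  proof
    fix x assume x: "x \<in> B"
    have "x \<notin> D" using D0 by simp
    then have ge: "(a+b)^N * (l * (f1 x ^ N / v1) + (1 - l) * (f2 x ^ N / v2)) \<le> (f1 x + f2 x) ^ N"
      using x by (simp add: D_def not_less)
    show "f2 x = (root N v2 / root N v1) * f1 x"
    proof (rule ccontr)
      assume ne: "f2 x \<noteq> (root N v2 / root N v1) * f1 x"
      have "f1 x / a \<noteq> f2 x / b"
      proof
        assume "f1 x / a = f2 x / b"
        then have "f2 x = (b / a) * f1 x" using ab by (simp add: field_simps)
        then show False using ne by (simp add: a_def b_def)
      qed
      then have st: "(l * (f1 x / a) + (1 - l) * (f2 x / b)) ^ N < l * (f1 x / a) ^ N + (1 - l) * (f2 x / b) ^ N"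
      proof -
        have "0 \<le> f1 x / a" "0 \<le> f2 x / b" using p1[OF x] p2[OF x] ab by simp_all
        then show ?thesis using pow_strict_convex2[OF l(1,2) _ _ _ N2] \<open>f1 x / a \<noteq> f2 x / b\<close> by blast
      qed
      have "(f1 x + f2 x) ^ N = (a+b)^N * (l * (f1 x / a) + (1 - l) * (f2 x / b)) ^ N"
        by (subst pt) (simp add: power_mult_distrib)
      also have "\<dots> < (a+b)^N * (l * (f1 x / a) ^ N + (1 - l) * (f2 x / b) ^ N)"
        using st ab by simp
      also have "\<dots> = (a+b)^N * (l * (f1 x ^ N / v1) + (1 - l) * (f2 x ^ N / v2))"
        by (simp add: power_divide aN)
      finally show False using ge by simp
    qed
  qed
qed


lemma measure_le_cover:
  fixes S T N :: "'a::euclidean_space set"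
  assumes T: "T \<in> lmeasurable" and N: "negligible N" and sub: "S \<subseteq> T \<union> N"
  shows "measure lebesgue S \<le> measure lebesgue T"
proof (cases "S \<in> sets lebesgue")
  case True
  have Nm: "N \<in> lmeasurable" using N by (rule negligible_imp_measurable)
  have TN: "T \<union> N \<in> lmeasurable" using T Nm by (rule fmeasurable.Un)
  have "measure lebesgue S \<le> measure lebesgue (T \<union> N)"
    using sub True TN by (rule measure_mono_fmeasurable)
  also have "\<dots> \<le> measure lebesgue T + measure lebesgue N"
    using T Nm by (intro measure_Un_le) auto
  also have "measure lebesgue N = 0" using N by (rule negligible_imp_measure0)
  finally show ?thesis by simp
next
  case False
  then have "measure lebesgue S = 0" by (rule measure_notin_sets)
  then show ?thesis by simp
qed

lemma lmeasurable_cover: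
  fixes S T N :: "'a::euclidean_space set"
  assumes T: "T \<in> lmeasurable" and N: "negligible N" and sub: "S \<subseteq> T \<union> N" and S: "S \<in> sets lebesgue"
  shows "S \<in> lmeasurable"
proof -
  have Nm: "N \<in> lmeasurable" using N by (rule negligible_imp_measurable)
  have TN: "T \<union> N \<in> lmeasurable" using T Nm by (rule fmeasurable.Un)
  show ?thesis using fmeasurableI2[OF TN sub S] .
qed

lemma pow_less_iff: "0 \<le> a \<Longrightarrow> 0 \<le> (b::real) \<Longrightarrow> n > 0 \<Longrightarrow> (a ^ n < b ^ n) = (a < b)"
proof -
  assume "0 \<le> a" "0 \<le> b" "n > 0"
  then have "b ^ n \<le> a ^ n \<longleftrightarrow> b \<le> a" using power_mono_iff[of b a n] by blast
  then show ?thesis by (meson not_le)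
qed

context cclose
begin

lemma frontier_C: "C - U \<subseteq> frontier C" "negligible (frontier C)"
proof -
  show "C - U \<subseteq> frontier C" using C_closed by (simp add: frontier_def closure_closed)
  show "negligible (frontier C)" by (rule negligible_convex_frontier[OF C_convex])
qed

definition "h x = norm x * R x"

lemma h_pos: assumes "x \<in> U" shows "h x > 0"
proof -
  have "x \<noteq> 0" using assms zero_notin_U by auto
  then show ?thesis using R_props(1)[OF assms] by (simp add: h_def)
qed

lemma h_cont: "continuous_on U h"
  unfolding h_def by (intro continuous_intros R_cont)

lemma h_scale: "x \<in> U \<Longrightarrow> c > 0 \<Longrightarrow> h (c *\<^sub>R x) = h x"
  by (simp add: h_def R_scale)

lemma UmAA: "U - AA = {x\<in>U. norm x ^ DIM('a) < h x ^ DIM('a)}"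
proof -
  have "x \<notin> AA \<longleftrightarrow> norm x ^ DIM('a) < h x ^ DIM('a)" if x: "x \<in> U" for x
  proof -
    have n: "norm x > 0" using x zero_notin_U by auto
    have "norm x ^ DIM('a) < h x ^ DIM('a) \<longleftrightarrow> norm x < h x"
      using pow_less_iff[of "norm x" "h x" "DIM('a)"] h_pos[OF x] by simp
    also have "\<dots> \<longleftrightarrow> 1 < R x" using n by (simp add: h_def)
    also have "\<dots> \<longleftrightarrow> x \<notin> AA" using AA_iff[OF x] by linarith
    finally show ?thesis by simp
  qed
  then show ?thesis by auto
qed

abbreviation "B \<equiv> {x\<in>U. norm x < 1}"

lemma B_open: "open B"
  by (rule open_lt_on[OF open_interior]) (auto intro!: continuous_intros)

lemma vol_polar: "emeasure lborel (U - AA) = (\<integral>\<^sup>+x. ennreal (indicator B x * h x ^ DIM('a)) \<partial>lborel)"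
proof -
  have "emeasure lborel {x\<in>U. norm x ^ DIM('a) < h x ^ DIM('a)}
        = (\<integral>\<^sup>+x. indicator B x * ennreal (h x ^ DIM('a)) \<partial>lborel)"
    by (rule polar) (auto intro!: continuous_intros h_cont simp: zero_notin_U U_scale h_scale)
  also have "\<dots> = (\<integral>\<^sup>+x. ennreal (indicator B x * h x ^ DIM('a)) \<partial>lborel)"
    by (intro nn_integral_cong) (simp split: split_indicator)
  finally show ?thesis by (simp add: UmAA)
qed

lemma UmAA_open: "open (U - AA)"
  using AA_closed by (intro open_Diff open_interior)

lemma UmAA_lmeas: "U - AA \<in> lmeasurable"
proof (rule fmeasurableI2[OF AA_meas])
  show "U - AA \<subseteq> C - AA" using interior_subset by blast
  show "U - AA \<in> sets lebesgue" using UmAA_open by simp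
qed

lemma meas_CmAA: "measure lebesgue (C - AA) = measure lebesgue (U - AA)"
proof (rule antisym)
  show "measure lebesgue (C - AA) \<le> measure lebesgue (U - AA)"
    by (rule measure_le_cover[OF UmAA_lmeas frontier_C(2)]) (use frontier_C(1) in blast)
  show "measure lebesgue (U - AA) \<le> measure lebesgue (C - AA)"
    by (rule measure_le_cover[OF AA_meas negligible_empty]) (use interior_subset in blast)
qed

lemma emeasure_UmAA: "emeasure lborel (U - AA) = ennreal (measure lebesgue (C - AA))"
proof -
  have sl: "U - AA \<in> sets lborel" using UmAA_open by simp
  have "emeasure lborel (U - AA) = emeasure lebesgue (U - AA)" using sl by simp
  also have "\<dots> = ennreal (measure lebesgue (U - AA))"
    using UmAA_lmeas by (simp add: emeasure_eq_measure2)
  finally show ?thesis by (simp add: meas_CmAA)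
qed

lemma I_eq: "(\<integral>\<^sup>+x. ennreal (indicator B x * h x ^ DIM('a)) \<partial>lborel) = ennreal (measure lebesgue (C - AA))"
  using vol_polar emeasure_UmAA by simp

lemma meas_pos: "measure lebesgue (C - AA) > 0"
proof -
  obtain u where u: "u \<in> U" using U_ne by blast
  obtain d where d: "d > 0" "\<And>y. y \<in> AA \<Longrightarrow> d \<le> norm y" using AA_delta by blast
  have nu: "norm u > 0" using u zero_notin_U by auto
  define t where "t = d / (2 * norm u)"
  have t: "t > 0" using d nu by (simp add: t_def)
  have "norm (t *\<^sub>R u) = d / 2" using t nu d by (simp add: t_def)
  then have "t *\<^sub>R u \<notin> AA" using d(1) d(2)[of "t *\<^sub>R u"] by linarith
  moreover have "t *\<^sub>R u \<in> U" using U_scale[OF u t] .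
  ultimately have ne: "U - AA \<noteq> {}" by blast
  have "\<not> negligible (U - AA)" using open_not_negligible[OF UmAA_open ne] .
  then have "measure lebesgue (U - AA) \<noteq> 0"
    using UmAA_lmeas negligible_iff_measure0 by blast
  then show ?thesis using meas_CmAA by (simp add: order_le_neq_trans[OF measure_nonneg] )
qed

end


locale cclose2 =
  fixes C AA1 AA2 :: "'a::euclidean_space set"
  assumes pc: "pointed_cone C" and cc1: "C_close C AA1" and cc2: "C_close C AA2"
begin

sublocale A1: cclose C AA1 using pc cc1 by unfold_locales
sublocale A2: cclose C AA2 using pc cc2 by unfold_locales

abbreviation "U \<equiv> interior C"
abbreviation "R1 \<equiv> radial AA1"
abbreviation "R2 \<equiv> radial AA2"

definition "T = {x\<in>U. R1 x + R2 x \<le> 1}"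
definition "S12 = {x\<in>U. 1 < R1 x + R2 x}"

lemma T0_eq: "{l *\<^sub>R u | l u. u \<in> Omega C \<and> l \<ge> radial AA1 u + radial AA2 u} = T"
proof (intro equalityI subsetI)
  fix x assume "x \<in> {l *\<^sub>R u | l u. u \<in> Omega C \<and> l \<ge> radial AA1 u + radial AA2 u}"
  then obtain l u where x: "x = l *\<^sub>R u" "u \<in> Omega C" "l \<ge> R1 u + R2 u" by blast
  have u: "u \<in> U" using x(2) by (simp add: Omega_def)
  have l: "l > 0" using A1.R_props(1)[OF u] A2.R_props(1)[OF u] x(3) by linarith
  have xU: "x \<in> U" using A1.U_scale[OF u l] x(1) by simp
  have "R1 x + R2 x = (R1 u + R2 u) / l" using A1.R_scale[OF u l] A2.R_scale[OF u l] x(1) by (simp add: add_divide_distrib)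
  also have "\<dots> \<le> 1" using x(3) l by simp
  finally show "x \<in> T" using xU by (simp add: T_def)
next
  fix x assume "x \<in> T"
  then have x: "x \<in> U" "R1 x + R2 x \<le> 1" by (auto simp: T_def)
  have n: "norm x > 0" using x A1.zero_notin_U by auto
  define u where "u = (1 / norm x) *\<^sub>R x"
  have u: "u \<in> U" using A1.U_scale[OF x(1), of "1 / norm x"] n by (simp add: u_def)
  have nu: "norm u = 1" using n by (simp add: u_def)
  have uO: "u \<in> Omega C" using u nu by (simp add: Omega_def)
  have R: "R1 u = norm x * R1 x" "R2 u = norm x * R2 x"
    using A1.R_scale[OF x(1), of "1 / norm x"] A2.R_scale[OF x(1), of "1 / norm x"] n by (simp_all add: u_def)
  have "R1 u + R2 u \<le> norm x" using x(2) n unfolding R by (simp add: distrib_left[symmetric] mult_le_cancel_left1)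
  moreover have "x = norm x *\<^sub>R u" using n by (simp add: u_def)
  ultimately show "x \<in> {l *\<^sub>R u | l u. u \<in> Omega C \<and> l \<ge> radial AA1 u + radial AA2 u}" using uO by blast
qed

lemma RS_eq: "radial_sum C AA1 AA2 = closure T"
  unfolding radial_sum_def T0_eq ..

lemma R12_cont: "continuous_on U (\<lambda>x. R1 x + R2 x)"
  by (intro continuous_intros A1.R_cont A2.R_cont)

lemma S12_open: "open S12"
  unfolding S12_def by (rule open_lt_on[OF open_interior]) (auto intro!: continuous_intros R12_cont)

lemma closure_T_U: "closure T \<inter> U = T"
proof (intro equalityI subsetI)
  fix x assume x: "x \<in> closure T \<inter> U"
  show "x \<in> T"
  proof (rule ccontr)
    assume "x \<notin> T"
    then have "x \<in> S12" using x by (auto simp: T_def S12_def)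
    moreover have "S12 \<inter> T = {}" by (auto simp: T_def S12_def)
    then have "S12 \<inter> closure T = {}" using open_Int_closure_eq_empty[OF S12_open] by blast
    ultimately show False using x by blast
  qed
next
  fix x assume "x \<in> T" then show "x \<in> closure T \<inter> U" using closure_subset[of T] by (auto simp: T_def)
qed

lemma RC_cover: "S12 \<subseteq> radial_cosum C AA1 AA2" "radial_cosum C AA1 AA2 \<subseteq> S12 \<union> frontier C"
proof -
  have S12T: "S12 = U - T" by (auto simp: S12_def T_def)
  show "S12 \<subseteq> radial_cosum C AA1 AA2"
    unfolding radial_cosum_def RS_eq S12T using closure_T_U interior_subset by blast
  show "radial_cosum C AA1 AA2 \<subseteq> S12 \<union> frontier C"
    unfolding radial_cosum_def RS_eq S12T using closure_T_U A1.frontier_C(1) closure_subset by blast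
qed

lemma S12_eq: "S12 = {x\<in>U. norm x ^ DIM('a) < (A1.h x + A2.h x) ^ DIM('a)}"
proof -
  have "1 < R1 x + R2 x \<longleftrightarrow> norm x ^ DIM('a) < (A1.h x + A2.h x) ^ DIM('a)" if x: "x \<in> U" for x
  proof -
    have n: "norm x > 0" using x A1.zero_notin_U by auto
    have hp: "A1.h x + A2.h x \<ge> 0" using A1.h_pos[OF x] A2.h_pos[OF x] by simp
    have "norm x ^ DIM('a) < (A1.h x + A2.h x) ^ DIM('a) \<longleftrightarrow> norm x < A1.h x + A2.h x"
      using pow_less_iff[of "norm x" "A1.h x + A2.h x" "DIM('a)"] hp by simp
    also have "\<dots> \<longleftrightarrow> norm x * 1 < norm x * (R1 x + R2 x)" by (simp add: A1.h_def A2.h_def distrib_left)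
    also have "\<dots> \<longleftrightarrow> 1 < R1 x + R2 x" using n by (simp only: mult_less_cancel_left_pos)
    finally show ?thesis by simp
  qed
  then show ?thesis by (auto simp: S12_def)
qed

lemma vol12_polar: "emeasure lborel S12 = (\<integral>\<^sup>+x. ennreal (indicator A1.B x * (A1.h x + A2.h x) ^ DIM('a)) \<partial>lborel)"
proof -
  have "emeasure lborel {x\<in>U. norm x ^ DIM('a) < (A1.h x + A2.h x) ^ DIM('a)}
        = (\<integral>\<^sup>+x. indicator A1.B x * ennreal ((A1.h x + A2.h x) ^ DIM('a)) \<partial>lborel)"
    by (rule polar) (auto intro!: continuous_intros A1.h_cont A2.h_cont simp: A1.zero_notin_U A1.U_scale A1.h_scale A2.h_scale)
  also have "\<dots> = (\<integral>\<^sup>+x. ennreal (indicator A1.B x * (A1.h x + A2.h x) ^ DIM('a)) \<partial>lborel)"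
    by (intro nn_integral_cong) (simp split: split_indicator)
  finally show ?thesis by (simp add: S12_eq)
qed

definition "M = {a + b | a b. a \<in> AA1 \<and> b \<in> AA2}"

lemma T_sub_M: "T \<subseteq> M"
proof
  fix x assume "x \<in> T"
  then have x: "x \<in> U" "R1 x + R2 x \<le> 1" by (auto simp: T_def)
  have a: "R1 x *\<^sub>R x \<in> AA1" by (rule A1.R_props(2)[OF x(1)])
  have "R2 x \<le> 1 - R1 x" using x by simp
  then have b: "(1 - R1 x) *\<^sub>R x \<in> AA2" using A2.R_props(3)[OF x(1)] by blast
  have "x = R1 x *\<^sub>R x + (1 - R1 x) *\<^sub>R x" by (simp add: algebra_simps)
  then show "x \<in> M" using a b unfolding M_def by blast
qed

lemma M_convex: "convex M"
proof -
  have "M = (\<Union>x\<in>AA1. \<Union>y\<in>AA2. {x + y})" unfolding M_def by blast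
  then show ?thesis using convex_sums[OF A1.AA_convex A2.AA_convex] by simp
qed

lemma co_sum_cover: "co_sum C AA1 AA2 \<subseteq> radial_cosum C AA1 AA2 \<union> frontier M"
proof
  fix x assume x: "x \<in> co_sum C AA1 AA2"
  then have xC: "x \<in> C" "x \<notin> M" by (auto simp: co_sum_def M_def)
  show "x \<in> radial_cosum C AA1 AA2 \<union> frontier M"
  proof (cases "x \<in> closure M")
    case True
    then have "x \<in> frontier M" using xC interior_subset by (auto simp: frontier_def)
    then show ?thesis by simp
  next
    case False
    have "closure T \<subseteq> closure M" using T_sub_M by (rule closure_mono)
    then have "x \<notin> closure T" using False by blast
    then show ?thesis using xC by (simp add: radial_cosum_def RS_eq)
  qed
qed

end


context cclose
begin

lemma C_add: "x \<in> C \<Longrightarrow> y \<in> C \<Longrightarrow> x + y \<in> C"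
  using pc unfolding pointed_cone_def convex_cone_iff by blast

lemma add_U: assumes x: "x \<in> C" and y: "y \<in> U" shows "x + y \<in> U"
proof -
  obtain e where e: "e > 0" "ball y e \<subseteq> C" using y by (meson mem_interior)
  have "ball (x + y) e \<subseteq> C"
  proof
    fix z assume "z \<in> ball (x + y) e"
    then have "z - x \<in> ball y e" by (simp add: dist_norm algebra_simps)
    then have "z - x \<in> C" using e by blast
    from C_add[OF x this] show "z \<in> C" by simp
  qed
  then show ?thesis using e by (meson mem_interior)
qed

lemma AA_closure: "AA = closure (AA \<inter> U)"
proof (intro equalityI)
  show "closure (AA \<inter> U) \<subseteq> AA" using AA_closed by (simp add: closure_minimal)
  show "AA \<subseteq> closure (AA \<inter> U)"
  proof
    fix x assume x: "x \<in> AA"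
    obtain u where u: "u \<in> U" using U_ne by blast
    have uC: "u \<in> C" using u interior_subset by blast
    have xC: "x \<in> C" using x AA_sub by blast
    show "x \<in> closure (AA \<inter> U)"
      unfolding closure_approachable
    proof (intro allI impI)
      fix e :: real assume e: "e > 0"
      define t where "t = e / (norm u + 1)"
      have t: "t > 0" using e by (simp add: t_def add_nonneg_pos)
      have "u \<in> rec_cone AA" using uC AA_rec by simp
      then have "x + t *\<^sub>R u \<in> AA" using x t unfolding rec_cone_def by simp
      moreover have "x + t *\<^sub>R u \<in> U" using add_U[OF xC U_scale[OF u t]] .
      moreover have "dist (x + t *\<^sub>R u) x < e"
      proof -
        have "dist (x + t *\<^sub>R u) x = t * norm u" using t by (simp add: dist_norm)
        also have "\<dots> < t * (norm u + 1)" using t by simp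
        also have "\<dots> = e"
        proof -
          have "norm u + 1 > 0" by (simp add: add_nonneg_pos)
          then show ?thesis by (simp add: t_def)
        qed
        finally show ?thesis .
      qed
      ultimately show "\<exists>y\<in>AA \<inter> U. dist y x < e" by blast
    qed
  qed
qed

end

context cclose2
begin

lemma dilate_R: assumes k: "k > 0" and D: "AA2 = (\<lambda>x. k *\<^sub>R x) ` AA1" and x: "x \<in> U"
  shows "R2 x = k * R1 x"
proof -
  have iff: "r *\<^sub>R x \<in> AA2 \<longleftrightarrow> (r / k) *\<^sub>R x \<in> AA1" for r
  proof
    assume "r *\<^sub>R x \<in> AA2"
    then obtain a where a: "a \<in> AA1" "r *\<^sub>R x = k *\<^sub>R a" using D by auto
    have "a = (1/k) *\<^sub>R (k *\<^sub>R a)" using k by simp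
    also have "\<dots> = (1/k) *\<^sub>R (r *\<^sub>R x)" using a(2) by simp
    also have "\<dots> = (r / k) *\<^sub>R x" by simp
    finally have "(r / k) *\<^sub>R x = a" by simp
    then show "(r / k) *\<^sub>R x \<in> AA1" using a by simp
  next
    assume "(r / k) *\<^sub>R x \<in> AA1"
    then have "k *\<^sub>R ((r / k) *\<^sub>R x) \<in> AA2" using D by blast
    then show "r *\<^sub>R x \<in> AA2" using k by simp
  qed
  have 1: "R2 x \<le> k * R1 x"
  proof -
    have "((k * R1 x) / k) *\<^sub>R x \<in> AA1" using A1.R_props(2)[OF x] k by simp
    then show ?thesis using iff A2.R_props(3)[OF x] by blast
  qed
  have 2: "k * R1 x \<le> R2 x"
  proof -
    have "(R2 x / k) *\<^sub>R x \<in> AA1" using iff A2.R_props(2)[OF x] by blast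
    then have "R1 x \<le> R2 x / k" using A1.R_props(3)[OF x] by blast
    then show ?thesis using k by (simp add: field_simps)
  qed
  show ?thesis using 1 2 by simp
qed

lemma R_dilate: assumes k: "k > 0" and RR: "\<And>x. x \<in> U \<Longrightarrow> R2 x = k * R1 x"
  shows "AA2 = (\<lambda>x. k *\<^sub>R x) ` AA1"
proof -
  have eq: "AA2 \<inter> U = (\<lambda>x. k *\<^sub>R x) ` (AA1 \<inter> U)"
  proof (intro equalityI subsetI)
    fix x assume x: "x \<in> AA2 \<inter> U"
    have y: "(1/k) *\<^sub>R x \<in> U" using A1.U_scale x k by simp
    have "R1 ((1/k) *\<^sub>R x) = k * R1 x" using A1.R_scale[of x "1/k"] x k by simp
    also have "\<dots> = R2 x" using RR x by simp
    also have "\<dots> \<le> 1" using A2.AA_iff x by blast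
    finally have "(1/k) *\<^sub>R x \<in> AA1" using A1.AA_iff[OF y] by simp
    moreover have "x = k *\<^sub>R ((1/k) *\<^sub>R x)" using k by simp
    ultimately show "x \<in> (\<lambda>x. k *\<^sub>R x) ` (AA1 \<inter> U)" using y by blast
  next
    fix x assume "x \<in> (\<lambda>x. k *\<^sub>R x) ` (AA1 \<inter> U)"
    then obtain y where y: "x = k *\<^sub>R y" "y \<in> AA1" "y \<in> U" by blast
    have xU: "x \<in> U" using A1.U_scale y k by simp
    have "R2 x = k * R1 x" using RR xU by simp
    also have "R1 x = R1 y / k" using A1.R_scale[OF y(3) k] y by simp
    finally have "R2 x = R1 y" using k by simp
    also have "\<dots> \<le> 1" using A1.AA_iff y by blast
    finally show "x \<in> AA2 \<inter> U" using A2.AA_iff[OF xU] xU by simp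
  qed
  have "AA2 = closure (AA2 \<inter> U)" by (rule A2.AA_closure)
  also have "\<dots> = (\<lambda>x. k *\<^sub>R x) ` closure (AA1 \<inter> U)" unfolding eq by (rule closure_scaleR[symmetric])
  also have "closure (AA1 \<inter> U) = AA1" by (rule A1.AA_closure[symmetric])
  finally show ?thesis .
qed

end


context cclose2
begin

abbreviation "m1 \<equiv> measure lebesgue (C - AA1)"
abbreviation "m2 \<equiv> measure lebesgue (C - AA2)"
abbreviation "m12 \<equiv> measure lebesgue (radial_cosum C AA1 AA2)"
abbreviation "m0 \<equiv> measure lebesgue (co_sum C AA1 AA2)"

lemma hcB: "continuous_on A1.B A1.h" "continuous_on A1.B A2.h"
proof -
  show "continuous_on A1.B A1.h" by (rule continuous_on_subset[OF A1.h_cont]) blast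
  show "continuous_on A1.B A2.h" by (rule continuous_on_subset[OF A2.h_cont]) blast
qed

lemma core_inst:
  shows "(\<integral>\<^sup>+x. ennreal (indicator A1.B x * (A1.h x + A2.h x) ^ DIM('a)) \<partial>lborel)
           \<le> ennreal ((root DIM('a) m1 + root DIM('a) m2) ^ DIM('a))"
    and "DIM('a) \<ge> 2 \<Longrightarrow> (\<integral>\<^sup>+x. ennreal (indicator A1.B x * (A1.h x + A2.h x) ^ DIM('a)) \<partial>lborel)
           = ennreal ((root DIM('a) m1 + root DIM('a) m2) ^ DIM('a))
         \<Longrightarrow> \<forall>x\<in>A1.B. A2.h x = (root DIM('a) m2 / root DIM('a) m1) * A1.h x"
proof -
  have N: "DIM('a) \<ge> 1" by (simp add: Suc_leI)
  have p1: "\<And>x. x \<in> A1.B \<Longrightarrow> A1.h x > 0" using A1.h_pos by blast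
  have p2: "\<And>x. x \<in> A1.B \<Longrightarrow> A2.h x > 0" using A2.h_pos by blast
  note c = core[OF A1.B_open hcB(1) hcB(2) p1 p2 N A1.I_eq A2.I_eq A1.meas_pos A2.meas_pos]
  show "(\<integral>\<^sup>+x. ennreal (indicator A1.B x * (A1.h x + A2.h x) ^ DIM('a)) \<partial>lborel)
           \<le> ennreal ((root DIM('a) m1 + root DIM('a) m2) ^ DIM('a))" using c(1) by simp
  show "DIM('a) \<ge> 2 \<Longrightarrow> (\<integral>\<^sup>+x. ennreal (indicator A1.B x * (A1.h x + A2.h x) ^ DIM('a)) \<partial>lborel)
           = ennreal ((root DIM('a) m1 + root DIM('a) m2) ^ DIM('a))
         \<Longrightarrow> \<forall>x\<in>A1.B. A2.h x = (root DIM('a) m2 / root DIM('a) m1) * A1.h x" using c(2) by simp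
qed

lemma S12_lmeas: "S12 \<in> lmeasurable"
proof (rule fmeasurableI)
  show "S12 \<in> sets lebesgue" using S12_open by simp
  have "emeasure lebesgue S12 = emeasure lborel S12" using S12_open by simp
  also have "\<dots> \<le> ennreal ((root DIM('a) m1 + root DIM('a) m2) ^ DIM('a))"
    using core_inst(1) vol12_polar by simp
  also have "\<dots> < \<infinity>" by simp
  finally show "emeasure lebesgue S12 < \<infinity>" .
qed

lemma RC_sets: "radial_cosum C AA1 AA2 \<in> sets lebesgue"
proof -
  have "closed (closure T)" by simp
  then have "radial_cosum C AA1 AA2 = C \<inter> - closure T" by (auto simp: radial_cosum_def RS_eq)
  moreover have "C \<inter> - closure T \<in> sets borel" using A1.C_closed
    by (intro sets.Int borel_closed borel_open) (auto simp: open_Compl)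
  ultimately show ?thesis by simp
qed

lemma RC_lmeas: "radial_cosum C AA1 AA2 \<in> lmeasurable"
  by (rule lmeasurable_cover[OF S12_lmeas A1.frontier_C(2) RC_cover(2) RC_sets])

lemma m12_eq: "m12 = measure lebesgue S12"
proof (rule antisym)
  show "m12 \<le> measure lebesgue S12"
    by (rule measure_le_cover[OF S12_lmeas A1.frontier_C(2) RC_cover(2)])
  show "measure lebesgue S12 \<le> m12"
    by (rule measure_le_cover[OF RC_lmeas negligible_empty]) (use RC_cover(1) in blast)
qed

lemma m12_emeasure: "ennreal m12 = emeasure lborel S12"
proof -
  have "emeasure lborel S12 = emeasure lebesgue S12" using S12_open by simp
  also have "\<dots> = ennreal (measure lebesgue S12)" using S12_lmeas by (simp add: emeasure_eq_measure2)
  finally show ?thesis by (simp add: m12_eq)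
qed

lemma m12_int: "ennreal m12 = (\<integral>\<^sup>+x. ennreal (indicator A1.B x * (A1.h x + A2.h x) ^ DIM('a)) \<partial>lborel)"
  using m12_emeasure vol12_polar by simp

lemma ineq1: "m0 \<le> m12"
proof (rule measure_le_cover[OF RC_lmeas _ co_sum_cover])
  show "negligible (frontier M)" by (rule negligible_convex_frontier[OF M_convex])
qed

lemma ineq2: "m12 \<le> (root DIM('a) m1 + root DIM('a) m2) ^ DIM('a)"
proof -
  have "ennreal m12 \<le> ennreal ((root DIM('a) m1 + root DIM('a) m2) ^ DIM('a))"
    using m12_int core_inst(1) by simp
  moreover have "0 \<le> (root DIM('a) m1 + root DIM('a) m2) ^ DIM('a)"
    using A1.meas_pos A2.meas_pos by simp
  ultimately show ?thesis by (simp add: ennreal_le_iff)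
qed

lemma eq_imp_dilates:
  assumes N2: "DIM('a) \<ge> 2" and eq: "m12 = (root DIM('a) m1 + root DIM('a) m2) ^ DIM('a)"
  shows "dilates AA1 AA2"
proof -
  define k where "k = root DIM('a) m2 / root DIM('a) m1"
  have k: "k > 0" using A1.meas_pos A2.meas_pos by (simp add: k_def)
  have "\<forall>x\<in>A1.B. A2.h x = k * A1.h x"
    using core_inst(2)[OF N2] m12_int eq by (simp add: k_def)
  then have hB: "\<And>x. x \<in> A1.B \<Longrightarrow> A2.h x = k * A1.h x" by blast
  have "R2 x = k * R1 x" if x: "x \<in> U" for x
  proof -
    have n: "norm x > 0" using x A1.zero_notin_U by auto
    define c where "c = 1 / (2 * norm x)"
    have c: "c > 0" using n by (simp add: c_def)
    have y: "c *\<^sub>R x \<in> A1.B" using A1.U_scale[OF x c] n by (simp add: c_def)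
    have "A2.h x = A2.h (c *\<^sub>R x)" using A2.h_scale[OF x c] by simp
    also have "\<dots> = k * A1.h (c *\<^sub>R x)" using hB[OF y] .
    also have "\<dots> = k * A1.h x" using A1.h_scale[OF x c] by simp
    finally have "norm x * R2 x = norm x * (k * R1 x)" by (simp add: A1.h_def A2.h_def algebra_simps)
    then show ?thesis using n by simp
  qed
  then have "AA2 = (\<lambda>x. k *\<^sub>R x) ` AA1" using R_dilate[OF k] by blast
  then show ?thesis using k unfolding dilates_def by blast
qed

lemma dilates_imp_eq:
  assumes "dilates AA1 AA2"
  shows "m0 = m12" "m12 = (root DIM('a) m1 + root DIM('a) m2) ^ DIM('a)"
proof -
  obtain k where k: "k > 0" and D: "AA2 = (\<lambda>x. k *\<^sub>R x) ` AA1" using assms unfolding dilates_def by blast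
  have RR: "R2 x = k * R1 x" if "x \<in> U" for x using dilate_R[OF k D that] .
  have hh: "A2.h x = k * A1.h x" if "x \<in> U" for x using RR[OF that] by (simp add: A1.h_def A2.h_def)
  have N0: "DIM('a) > 0" by simp
  have "ennreal m2 = (\<integral>\<^sup>+x. ennreal (indicator A1.B x * A2.h x ^ DIM('a)) \<partial>lborel)" using A2.I_eq by simp
  also have "\<dots> = (\<integral>\<^sup>+x. ennreal (k ^ DIM('a)) * ennreal (indicator A1.B x * A1.h x ^ DIM('a)) \<partial>lborel)"
    using k by (intro nn_integral_cong) (auto simp: hh power_mult_distrib ennreal_mult'[symmetric] split: split_indicator)
  also have "\<dots> = ennreal (k ^ DIM('a)) * ennreal m1"
    using meas_ind[OF A1.B_open, of "\<lambda>x. A1.h x ^ DIM('a)"] hcB(1)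
    by (simp add: nn_integral_cmult A1.I_eq continuous_on_power)
  finally have m2e: "m2 = k ^ DIM('a) * m1" using k by (simp add: ennreal_mult'[symmetric])
  have "ennreal m12 = (\<integral>\<^sup>+x. ennreal (indicator A1.B x * (A1.h x + A2.h x) ^ DIM('a)) \<partial>lborel)" using m12_int .
  also have "\<dots> = (\<integral>\<^sup>+x. ennreal ((1 + k) ^ DIM('a)) * ennreal (indicator A1.B x * A1.h x ^ DIM('a)) \<partial>lborel)"
  proof (intro nn_integral_cong)
    fix x :: 'a
    show "ennreal (indicator A1.B x * (A1.h x + A2.h x) ^ DIM('a)) = ennreal ((1 + k) ^ DIM('a)) * ennreal (indicator A1.B x * A1.h x ^ DIM('a))"
    proof (cases "x \<in> A1.B")
      case True
      then have "A1.h x + A2.h x = (1 + k) * A1.h x" using hh by (simp add: algebra_simps)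
      then have "(A1.h x + A2.h x) ^ DIM('a) = (1 + k) ^ DIM('a) * A1.h x ^ DIM('a)" by (simp add: power_mult_distrib)
      then show ?thesis using True k A1.h_pos[of x] by (simp add: ennreal_mult'[symmetric])
    qed simp
  qed
  also have "\<dots> = ennreal ((1 + k) ^ DIM('a)) * ennreal m1"
    using meas_ind[OF A1.B_open, of "\<lambda>x. A1.h x ^ DIM('a)"] hcB(1)
    by (simp add: nn_integral_cmult A1.I_eq continuous_on_power)
  finally have m12e: "m12 = (1 + k) ^ DIM('a) * m1" using k by (simp add: ennreal_mult'[symmetric])
  have r2: "root DIM('a) m2 = k * root DIM('a) m1"
    unfolding m2e using k by (simp add: real_root_mult real_root_power_cancel)
  have "(root DIM('a) m1 + root DIM('a) m2) ^ DIM('a) = ((1 + k) * root DIM('a) m1) ^ DIM('a)"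
    unfolding r2 by (simp add: algebra_simps)
  also have "\<dots> = (1 + k) ^ DIM('a) * m1"
    using A1.meas_pos by (simp add: power_mult_distrib real_root_pow_pos2)
  finally show "m12 = (root DIM('a) m1 + root DIM('a) m2) ^ DIM('a)" using m12e by simp
  have MD: "M = (\<lambda>x. (1 + k) *\<^sub>R x) ` AA1"
  proof (intro equalityI subsetI)
    fix x assume "x \<in> M"
    then have "x \<in> {a + b | a b. a \<in> AA1 \<and> b \<in> AA2}" by (simp add: M_def)
    then obtain a b where ab: "x = a + k *\<^sub>R b" "a \<in> AA1" "b \<in> AA1" using D by blast
    have "(1/(1+k)) *\<^sub>R a + (k/(1+k)) *\<^sub>R b \<in> AA1"
    proof -
      have "1/(1+k) + k/(1+k) = 1" using k by (simp add: add_divide_distrib[symmetric])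
      moreover have "1/(1+k) \<ge> 0" "k/(1+k) \<ge> 0" using k by simp_all
      ultimately show ?thesis using A1.AA_convex ab(2,3) unfolding convex_def by blast
    qed
    moreover have "x = (1 + k) *\<^sub>R ((1/(1+k)) *\<^sub>R a + (k/(1+k)) *\<^sub>R b)"
      using k ab(1) by (simp add: scaleR_add_right)
    ultimately show "x \<in> (\<lambda>x. (1 + k) *\<^sub>R x) ` AA1" by blast
  next
    fix x assume "x \<in> (\<lambda>x. (1 + k) *\<^sub>R x) ` AA1"
    then obtain a where a: "x = (1 + k) *\<^sub>R a" "a \<in> AA1" by blast
    then have "x = a + k *\<^sub>R a" by (simp add: algebra_simps)
    moreover have "k *\<^sub>R a \<in> AA2" using D a by blast
    ultimately show "x \<in> M" using a unfolding M_def by blast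
  qed
  have Mc: "closed M" unfolding MD by (rule closed_scaling[OF A1.AA_closed])
  have MUT: "M \<inter> U \<subseteq> T"
  proof
    fix x assume x: "x \<in> M \<inter> U"
    then obtain a where a: "x = (1 + k) *\<^sub>R a" "a \<in> AA1" unfolding MD by blast
    have "(1/(1+k)) *\<^sub>R x \<in> AA1" using a k by simp
    then have "R1 x \<le> 1/(1+k)" using A1.R_props(3) x by blast
    then have "(1 + k) * R1 x \<le> 1" using k by (simp add: field_simps)
    then show "x \<in> T" using x RR by (simp add: T_def algebra_simps)
  qed
  have CM_sets: "C - M \<in> sets lebesgue"
  proof -
    have "C - M = C \<inter> - M" by blast
    moreover have "C \<inter> - M \<in> sets borel" using A1.C_closed Mc
      by (intro sets.Int borel_closed borel_open) (auto simp: open_Compl)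
    ultimately show ?thesis by simp
  qed
  have CM_eq: "co_sum C AA1 AA2 = C - M" by (simp add: co_sum_def M_def)
  have CM_lmeas: "C - M \<in> lmeasurable"
    using lmeasurable_cover[OF RC_lmeas negligible_convex_frontier[OF M_convex] co_sum_cover[unfolded CM_eq] CM_sets] .
  have "m12 \<le> measure lebesgue (C - M)"
  proof (rule measure_le_cover[OF CM_lmeas A1.frontier_C(2)])
    show "radial_cosum C AA1 AA2 \<subseteq> (C - M) \<union> frontier C"
    proof
      fix x assume x: "x \<in> radial_cosum C AA1 AA2"
      then have xC: "x \<in> C" "x \<notin> closure T" by (auto simp: radial_cosum_def RS_eq)
      show "x \<in> (C - M) \<union> frontier C"
      proof (cases "x \<in> U")
        case True
        then have "x \<notin> T" using xC closure_subset by blast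
        then have "x \<notin> M" using MUT True by blast
        then show ?thesis using xC by simp
      next
        case False then show ?thesis using xC A1.frontier_C(1) by blast
      qed
    qed
  qed
  then show "m0 = m12" using ineq1 CM_eq by simp
qed

end


theorem corollary6p1:
  fixes C AA1 AA2 :: "'a::euclidean_space set"
  assumes "DIM('a) \<ge> 2"
    and "pointed_cone C"
    and "C_close C AA1" and "C_close C AA2"
  defines "n \<equiv> real DIM('a)"
  shows "measure lebesgue (co_sum C AA1 AA2) powr (1/n)
           \<le> measure lebesgue (radial_cosum C AA1 AA2) powr (1/n)
       \<and> measure lebesgue (radial_cosum C AA1 AA2) powr (1/n)
           \<le> measure lebesgue (C - AA1) powr (1/n) + measure lebesgue (C - AA2) powr (1/n)
       \<and> ((measure lebesgue (co_sum C AA1 AA2) powr (1/n)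
              = measure lebesgue (radial_cosum C AA1 AA2) powr (1/n)
           \<and> measure lebesgue (radial_cosum C AA1 AA2) powr (1/n)
              = measure lebesgue (C - AA1) powr (1/n) + measure lebesgue (C - AA2) powr (1/n))
          \<longleftrightarrow> dilates AA1 AA2)"
proof -
  interpret cclose2 C AA1 AA2 using assms(2-4) by unfold_locales
  have N0: "DIM('a) > 0" by simp
  have pr: "x powr (1/n) = root DIM('a) x" if x: "x \<ge> 0" for x
  proof (cases "x = 0")
    case True then show ?thesis by simp
  next
    case False then have "x > 0" using x by simp
    then show ?thesis using root_powr_inverse[OF N0, of x] by (simp add: n_def)
  qed
  have e: "m0 powr (1/n) = root DIM('a) m0" "m12 powr (1/n) = root DIM('a) m12"
          "m1 powr (1/n) = root DIM('a) m1" "m2 powr (1/n) = root DIM('a) m2"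
    by (simp_all add: pr)
  define r1 where "r1 = root DIM('a) m1"
  define r2 where "r2 = root DIM('a) m2"
  have r: "r1 \<ge> 0" "r2 \<ge> 0" using A1.meas_pos A2.meas_pos by (simp_all add: r1_def r2_def)
  have i1: "root DIM('a) m0 \<le> root DIM('a) m12" using ineq1 N0 by simp
  have "root DIM('a) m12 \<le> root DIM('a) ((r1 + r2) ^ DIM('a))"
    using ineq2 N0 by (simp add: r1_def r2_def)
  then have i2: "root DIM('a) m12 \<le> r1 + r2" using r N0 by (simp add: real_root_power_cancel)
  have iff: "(root DIM('a) m0 = root DIM('a) m12 \<and> root DIM('a) m12 = r1 + r2) \<longleftrightarrow> dilates AA1 AA2"
  proof
    assume "root DIM('a) m0 = root DIM('a) m12 \<and> root DIM('a) m12 = r1 + r2"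
    then have "root DIM('a) m12 = r1 + r2" by simp
    then have "root DIM('a) m12 ^ DIM('a) = (r1 + r2) ^ DIM('a)" by simp
    then have "m12 = (r1 + r2) ^ DIM('a)" using N0 by (simp add: real_root_pow_pos2)
    then show "dilates AA1 AA2" using eq_imp_dilates[OF assms(1)] by (simp add: r1_def r2_def)
  next
    assume d: "dilates AA1 AA2"
    have "root DIM('a) m12 = root DIM('a) ((r1 + r2) ^ DIM('a))"
      using dilates_imp_eq(2)[OF d] by (simp add: r1_def r2_def)
    also have "\<dots> = r1 + r2" using r N0 by (simp add: real_root_power_cancel)
    finally show "root DIM('a) m0 = root DIM('a) m12 \<and> root DIM('a) m12 = r1 + r2"
      using dilates_imp_eq(1)[OF d] by simp
  qed
  show ?thesis unfolding e using i1 i2 iff by (simp add: r1_def r2_def)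
qed


end
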